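(* Let $\omega\in\mathbb Z\setminus\{0\}$, $\kappa=2\pi\omega$, $L^2_0=\{u\in L^2(\mathbb R/\mathbb Z):\int_0^1u=0\}$, and for $u\in L^2_0$ let $\mathscr Pu$ be the unique mean-zero primitive ($(\mathscr Pu)_s=u$, $\int_0^1\mathscr Pu=0$). Define the closure map $\mathscr C:L^2_0\to\mathbb C$, $\mathscr C(u)=\int_0^1\exp(i(\kappa s+\mathscr Pu(s)))\,ds$. If $u\in L^2_0$ satisfies $\mathscr C(u)=0$, then $D\mathscr C(u):L^2_0\to\mathbb C$, given by $D\mathscr C(u)[w]=i\int_0^1e^{i(\kappa s+\mathscr Pu(s))}\mathscr Pw(s)\,ds$, is surjective as a real-linear map onto $\mathbb C\cong\mathbb R^2$.
   Context: $\mathscr C(u)=0$ is precisely the condition that the curvature $k=\kappa+u$ reconstructs a closed unit-length curve (with tangent $e^{i(\kappa s+\mathscr Pu)}$) of turning number $\omega$. *)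

theory Defs
  imports "HOL-Analysis.Analysis"
begin

text \<open>Functions on the circle R/Z are represented by their restriction to [0,1].
  L^2_0: measurable, square-integrable, mean zero on [0,1].\<close>
definition L2_0 :: "(real \<Rightarrow> real) set" where
  "L2_0 = {u. u measurable_on {0..1} \<and> (\<lambda>s. (u s)^2) integrable_on {0..1}
              \<and> integral {0..1} u = 0}"

definition prim :: "(real \<Rightarrow> real) \<Rightarrow> real \<Rightarrow> real" where
  "prim u s = integral {0..s} u - integral {0..1} (\<lambda>t. integral {0..t} u)"

definition kappa :: "int \<Rightarrow> real" where
  "kappa \<omega> = 2 * pi * real_of_int \<omega>"

definition closure_map :: "int \<Rightarrow> (real \<Rightarrow> real) \<Rightarrow> complex" where
  "closure_map \<omega> u =
     integral {0..1} (\<lambda>s. exp (\<i> * complex_of_real (kappa \<omega> * s + prim u s)))"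

definition D_closure_map :: "int \<Rightarrow> (real \<Rightarrow> real) \<Rightarrow> (real \<Rightarrow> real) \<Rightarrow> complex" where
  "D_closure_map \<omega> u w =
     \<i> * integral {0..1} (\<lambda>s. exp (\<i> * complex_of_real (kappa \<omega> * s + prim u s))
                                  * complex_of_real (prim w s))"

end

theory Submission
  imports Defs
begin

lemma u_integrable:
  assumes "u \<in> L2_0" shows "u integrable_on {0..1}"
proof -
  have m: "u \<in> borel_measurable (lebesgue_on {0..1})"
    using assms by (simp add: L2_0_def measurable_on_iff_borel_measurable)
  have g: "(\<lambda>s. 1 + (u s)^2) integrable_on {0..1}"
    using assms by (auto simp: L2_0_def intro!: integrable_add)
  have b: "norm (u s) \<le> 1 + (u s)^2" for s
  proof (cases "\<bar>u s\<bar> \<le> 1")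
    case True then show ?thesis by (simp add: add_increasing2)
  next
    case False then have "\<bar>u s\<bar> \<le> \<bar>u s\<bar> * \<bar>u s\<bar>"
      using mult_right_mono[of 1 "\<bar>u s\<bar>" "\<bar>u s\<bar>"] by simp
    then show ?thesis by (simp add: power2_eq_square abs_mult_self_eq)
  qed
  show ?thesis
    by (rule measurable_bounded_by_integrable_imp_integrable[OF m g]) (use b in auto)
qed

lemma prim_cont: "f integrable_on {0..1} \<Longrightarrow> continuous_on {0..1} (prim f)"
  unfolding prim_def by (intro continuous_intros indefinite_integral_continuous_1)

definition okw :: "(real \<Rightarrow> real) \<Rightarrow> bool" where
  "okw w \<longleftrightarrow> continuous_on {0..1} w \<and> integral {0..1} w = 0"

lemma okw_L2: "okw w \<Longrightarrow> w \<in> L2_0"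
  unfolding okw_def L2_0_def
  by (auto simp: measurable_on_iff_borel_measurable intro!: continuous_imp_measurable_on_sets_lebesgue
      integrable_continuous_real continuous_intros)

lemma okw_int: "okw w \<Longrightarrow> w integrable_on {0..1}"
  unfolding okw_def by (auto intro: integrable_continuous_real)

lemma prim_lin:
  assumes "okw w1" "okw w2" "s \<in> {0..1}"
  shows "prim (\<lambda>x. a*w1 x + b*w2 x) s = a*prim w1 s + b*prim w2 s"
proof -
  have c1: "continuous_on {0..1} w1" and c2: "continuous_on {0..1} w2"
    using assms by (auto simp: okw_def)
  have i1: "w1 integrable_on {0..t}" and i2: "w2 integrable_on {0..t}" if "t \<in> {0..1}" for t
    using that by (auto intro!: integrable_continuous_real continuous_on_subset[OF c1]
        continuous_on_subset[OF c2])
  have L: "integral {0..t} (\<lambda>x. a*w1 x + b*w2 x) = a*integral {0..t} w1 + b*integral {0..t} w2"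
    if "t \<in> {0..1}" for t
    using i1[OF that] i2[OF that] by (subst integral_add) (auto intro: integrable_on_mult_right)
  have j1: "(\<lambda>t. integral {0..t} w1) integrable_on {0..1}"
    by (intro integrable_continuous_real indefinite_integral_continuous_1 okw_int assms)
  have j2: "(\<lambda>t. integral {0..t} w2) integrable_on {0..1}"
    by (intro integrable_continuous_real indefinite_integral_continuous_1 okw_int assms)
  have "integral {0..1} (\<lambda>t. integral {0..t} (\<lambda>x. a*w1 x + b*w2 x))
      = integral {0..1} (\<lambda>t. a*integral {0..t} w1 + b*integral {0..t} w2)"
    by (rule integral_cong) (use L in auto)
  also have "\<dots> = a * integral {0..1} (\<lambda>t. integral {0..t} w1) + b * integral {0..1} (\<lambda>t. integral {0..t} w2)"
    using j1 j2 by (subst integral_add) (auto intro: integrable_on_mult_right)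
  finally have R: "integral {0..1} (\<lambda>t. integral {0..t} (\<lambda>x. a*w1 x + b*w2 x)) = 
      a * integral {0..1} (\<lambda>t. integral {0..t} w1) + b * integral {0..1} (\<lambda>t. integral {0..t} w2)" .
  have L': "integral {0..s} (\<lambda>x. a*w1 x + b*w2 x) = a*integral {0..s} w1 + b*integral {0..s} w2"
    using L assms(3) by auto
  show ?thesis unfolding prim_def R L' by (simp add: algebra_simps)
qed

lemma dbr:
  assumes Gc: "continuous_on {0..1} G" and G0: "integral {0..1} G = 0"
    and H: "\<And>w. okw w \<Longrightarrow> integral {0..1} (\<lambda>s. G s * prim w s) = 0"
    and s: "s \<in> {0..1}"
  shows "G s = 0"
proof -
  define \<Gamma> where "\<Gamma> t = integral {0..t} G" for t
  define \<alpha> where "\<alpha> = integral {0..1} \<Gamma>"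
  define w where "w t = \<Gamma> t - \<alpha>" for t
  have Gi: "G integrable_on {0..1}" using Gc by (rule integrable_continuous_real)
  have \<Gamma>c: "continuous_on {0..1} \<Gamma>"
    unfolding \<Gamma>_def using Gi by (rule indefinite_integral_continuous_1)
  have \<Gamma>i: "\<Gamma> integrable_on {0..1}" using \<Gamma>c by (rule integrable_continuous_real)
  have wc: "continuous_on {0..1} w" unfolding w_def using \<Gamma>c by (intro continuous_intros)
  have wi: "integral {0..1} w = 0"
    unfolding w_def using \<Gamma>i by (subst integral_diff) (auto simp: \<alpha>_def)
  have okw: "okw w" using wc wi by (simp add: okw_def)
  define P where "P = prim w"
  have Pc: "continuous_on {0..1} P" unfolding P_def by (rule prim_cont, rule okw_int, rule okw)
  have dG: "(\<Gamma> has_real_derivative G t) (at t within {0..1})" if "t \<in> {0..1}" for t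
    using integral_has_vector_derivative[OF Gc that] unfolding \<Gamma>_def
    by (simp add: has_real_derivative_iff_has_vector_derivative)
  have dP: "(P has_real_derivative w t) (at t within {0..1})" if "t \<in> {0..1}" for t
  proof -
    have "((\<lambda>s. integral {0..s} w - integral {0..1} (\<lambda>t. integral {0..t} w)) has_vector_derivative w t - 0)
        (at t within {0..1})"
      by (intro derivative_intros integral_has_vector_derivative[OF wc that])
    then show ?thesis unfolding P_def prim_def[abs_def]
      by (simp add: has_real_derivative_iff_has_vector_derivative)
  qed
  have "((\<lambda>t. G t * P t + w t * \<Gamma> t) has_integral (\<Gamma> 1 * P 1 - \<Gamma> 0 * P 0)) {0..1}"
  proof (rule fundamental_theorem_of_calculus)
    fix t :: real assume t: "t \<in> {0..1}"
    have "((\<lambda>t. \<Gamma> t * P t) has_real_derivative (G t * P t + w t * \<Gamma> t)) (at t within {0..1})"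
      using DERIV_mult[OF dG[OF t] dP[OF t]] by (simp add: algebra_simps)
    then show "((\<lambda>t. \<Gamma> t * P t) has_vector_derivative (G t * P t + w t * \<Gamma> t)) (at t within {0..1})"
      by (simp add: has_real_derivative_iff_has_vector_derivative)
  qed simp
  moreover have "\<Gamma> 1 = 0" "\<Gamma> 0 = 0" using G0 by (auto simp: \<Gamma>_def)
  ultimately have I0: "integral {0..1} (\<lambda>t. G t * P t + w t * \<Gamma> t) = 0"
    by (simp add: integral_unique)
  have i1: "(\<lambda>t. G t * P t) integrable_on {0..1}"
    by (intro integrable_continuous_real continuous_intros Gc Pc)
  have i2: "(\<lambda>t. w t * \<Gamma> t) integrable_on {0..1}"
    by (intro integrable_continuous_real continuous_intros wc \<Gamma>c)
  have "integral {0..1} (\<lambda>t. w t * \<Gamma> t) = 0"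
    using I0 H[OF okw] i1 i2 by (simp add: integral_add P_def)
  moreover have "integral {0..1} (\<lambda>t. w t * \<Gamma> t) = integral {0..1} (\<lambda>t. (w t)^2 + \<alpha> * w t)"
    by (rule integral_cong) (simp add: w_def power2_eq_square algebra_simps)
  moreover have "integral {0..1} (\<lambda>t. (w t)^2 + \<alpha> * w t) = integral {0..1} (\<lambda>t. (w t)^2)"
    using wi wc by (subst integral_add) (auto intro!: integrable_continuous_real continuous_intros)
  ultimately have W0: "integral {0..1} (\<lambda>t. (w t)^2) = 0" by simp
  have wz: "(w t)^2 = 0" if "t \<in> {0..1}" for t
  proof (rule has_integral_0_cbox_imp_0[of 0 1 "\<lambda>t. (w t)^2"])
    show "continuous_on (cbox 0 1) (\<lambda>t. (w t)\<^sup>2)" using wc by (auto intro!: continuous_intros)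
    show "((\<lambda>t. (w t)\<^sup>2) has_integral 0) (cbox 0 1)"
      using W0 wc by (metis cbox_interval continuous_on_power has_integral_integral integrable_continuous_real)
  qed (use that in auto)
  have \<Gamma>z: "\<Gamma> t = 0" if "t \<in> {0..1}" for t
  proof -
    have "\<Gamma> t = \<alpha>" using wz[OF that] by (simp add: w_def)
    moreover have "\<Gamma> 0 = \<alpha>" using wz[of 0] by (simp add: w_def)
    moreover have "\<Gamma> 0 = 0" by (simp add: \<Gamma>_def)
    ultimately show ?thesis by simp
  qed
  have d1: "(\<Gamma> has_vector_derivative G s) (at s within cbox 0 1)"
    using dG[OF s] by (simp add: has_real_derivative_iff_has_vector_derivative)
  have d2: "(\<Gamma> has_vector_derivative 0) (at s within cbox 0 1)"
    by (rule has_vector_derivative_transform[of s _ _ "\<lambda>_. 0"]) (use s \<Gamma>z in auto)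
  show ?thesis
    using vector_derivative_unique_within_closed_interval[of 0 1 s \<Gamma>, OF _ _ d1 d2] s by simp
qed


lemma circle_const:
  fixes E :: "real \<Rightarrow> complex"
  assumes Ec: "continuous_on {0..1} E" and En: "\<And>s. s \<in> {0..1} \<Longrightarrow> norm (E s) = 1"
    and EI: "integral {0..1} E = 0" and b: "b \<noteq> 0"
    and R: "\<And>s. s \<in> {0..1} \<Longrightarrow> Re (b * E s) = 0"
  shows False
proof -
  define l where "l s = Im (b * E s)" for s
  have lc: "continuous_on {0..1} l" unfolding l_def using Ec by (intro continuous_intros)
  have lsq: "(l s)^2 = (cmod b)^2" if "s \<in> {0..1}" for s
  proof -
    have "(cmod (b * E s))^2 = (Re (b * E s))^2 + (Im (b * E s))^2" by (rule cmod_power2)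
    then show ?thesis using R[OF that] En[OF that] by (simp add: l_def norm_mult)
  qed
  have bpos: "(cmod b)^2 > 0" using b by simp
  have lint: "integral {0..1} l = 0"
  proof -
    have "(\<lambda>s. b * E s) integrable_on {0..1}"
      using Ec by (intro integrable_continuous_real continuous_intros)
    then have "integral {0..1} (Im \<circ> (\<lambda>s. b * E s)) = Im (integral {0..1} (\<lambda>s. b * E s))"
      by (rule integral_linear) (rule bounded_linear_Im)
    then show ?thesis using EI unfolding l_def o_def by simp
  qed
  have lconst: "l s = l 0" if s: "s \<in> {0..1}" for s
  proof (rule ccontr)
    assume ne: "l s \<noteq> l 0"
    have "(l s)^2 = (l 0)^2" using lsq[OF s] lsq[of 0] by simp
    then have m: "l s = - l 0" using ne by (simp add: power2_eq_iff)
    have l0: "l 0 \<noteq> 0" using lsq[of 0] bpos by auto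
    have cs: "continuous_on {0..s} l" using lc s by (auto intro: continuous_on_subset)
    have "\<exists>x. 0 \<le> x \<and> x \<le> s \<and> l x = 0"
    proof (cases "l 0 > 0")
      case True then show ?thesis using IVT2'[of l s 0 0, OF _ _ _ cs] m s by auto
    next
      case False then show ?thesis using IVT'[of l 0 0 s, OF _ _ _ cs] m s l0 by auto
    qed
    then obtain x where "0 \<le> x" "x \<le> s" "l x = 0" by blast
    then show False using lsq[of x] bpos s by auto
  qed
  have "integral {0..1} l = integral {0..1} (\<lambda>_::real. l 0)"
  proof (rule integral_cong)
    fix x :: real assume "x \<in> {0..1}" then show "l x = l 0" by (rule lconst)
  qed
  then have "l 0 = 0" using lint by simp
  then show False using lsq[of 0] bpos by simp
qed

definition Ef :: "int \<Rightarrow> (real \<Rightarrow> real) \<Rightarrow> real \<Rightarrow> complex" where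
  "Ef \<omega> u s = exp (\<i> * complex_of_real (kappa \<omega> * s + prim u s))"

lemma Ef_cont: "u \<in> L2_0 \<Longrightarrow> continuous_on {0..1} (Ef \<omega> u)"
  unfolding Ef_def[abs_def]
  by (intro continuous_intros prim_cont u_integrable)

lemma D_eq: "D_closure_map \<omega> u w = \<i> * integral {0..1} (\<lambda>s. Ef \<omega> u s * complex_of_real (prim w s))"
  unfolding D_closure_map_def Ef_def ..

lemma D_lin:
  assumes u: "u \<in> L2_0" and w: "okw w1" "okw w2"
  shows "D_closure_map \<omega> u (\<lambda>x. a*w1 x + b*w2 x)
     = of_real a * D_closure_map \<omega> u w1 + of_real b * D_closure_map \<omega> u w2"
proof -
  have Ec: "continuous_on {0..1} (Ef \<omega> u)" using u by (rule Ef_cont)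
  have p1: "continuous_on {0..1} (prim w1)" and p2: "continuous_on {0..1} (prim w2)"
    using w by (auto intro: prim_cont okw_int)
  have i1: "(\<lambda>s. Ef \<omega> u s * complex_of_real (prim w1 s)) integrable_on {0..1}"
    using Ec p1 by (intro integrable_continuous_real continuous_intros)
  have i2: "(\<lambda>s. Ef \<omega> u s * complex_of_real (prim w2 s)) integrable_on {0..1}"
    using Ec p2 by (intro integrable_continuous_real continuous_intros)
  have "integral {0..1} (\<lambda>s. Ef \<omega> u s * complex_of_real (prim (\<lambda>x. a*w1 x + b*w2 x) s))
      = integral {0..1} (\<lambda>s. of_real a * (Ef \<omega> u s * complex_of_real (prim w1 s))
                          + of_real b * (Ef \<omega> u s * complex_of_real (prim w2 s)))"
    by (rule integral_cong) (simp add: prim_lin[OF w] algebra_simps)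
  also have "\<dots> = of_real a * integral {0..1} (\<lambda>s. Ef \<omega> u s * complex_of_real (prim w1 s))
      + of_real b * integral {0..1} (\<lambda>s. Ef \<omega> u s * complex_of_real (prim w2 s))"
    using i1 i2 by (subst integral_add) (auto intro: integrable_on_mult_right)
  finally show ?thesis unfolding D_eq by (simp add: algebra_simps)
qed

lemma okw_lin: "okw w1 \<Longrightarrow> okw w2 \<Longrightarrow> okw (\<lambda>x. a*w1 x + b*w2 x)"
  unfolding okw_def
  by (auto intro!: continuous_intros simp: integral_add integrable_continuous_real integrable_on_mult_right)

theorem mainTheorem9:
  fixes \<omega> :: int and u :: "real \<Rightarrow> real"
  assumes "\<omega> \<noteq> 0"
    and "u \<in> L2_0"
    and "closure_map \<omega> u = 0"
  shows "\<forall>z::complex. \<exists>w\<in>L2_0. D_closure_map \<omega> u w = z"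
proof -
  note u = assms(2)
  define S where "S = {D_closure_map \<omega> u w | w. okw w}"
  have sub: "subspace S"
    unfolding subspace_def
  proof (intro conjI ballI allI)
    have "okw (\<lambda>_. 0)" by (simp add: okw_def)
    moreover have "D_closure_map \<omega> u (\<lambda>_. 0) = 0" by (simp add: D_closure_map_def prim_def)
    ultimately show "0 \<in> S" unfolding S_def by force
    show "x + y \<in> S" if xy: "x \<in> S" "y \<in> S" for x y
    proof -
      obtain w1 w2 where w: "okw w1" "okw w2" "x = D_closure_map \<omega> u w1" "y = D_closure_map \<omega> u w2"
        using xy unfolding S_def by blast
      have "D_closure_map \<omega> u (\<lambda>t. 1*w1 t + 1*w2 t) = x + y"
        using D_lin[OF u w(1,2), of \<omega> 1 1] w by simp
      then show ?thesis unfolding S_def using okw_lin[OF w(1,2), of 1 1] by (auto intro!: exI[of _ "\<lambda>t. 1*w1 t + 1*w2 t"])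
    qed
    show "c *\<^sub>R x \<in> S" if xy: "x \<in> S" for c x
    proof -
      obtain w1 where w: "okw w1" "x = D_closure_map \<omega> u w1"
        using xy unfolding S_def by blast
      have "D_closure_map \<omega> u (\<lambda>t. c*w1 t + 0*w1 t) = c *\<^sub>R x"
        using D_lin[OF u w(1) w(1), of \<omega> c 0] w by (simp add: scaleR_conv_of_real)
      then show ?thesis unfolding S_def using okw_lin[OF w(1) w(1), of c 0] by (auto intro!: exI[of _ "\<lambda>t. c*w1 t + 0*w1 t"])
    qed
  qed
  have "S = UNIV"
  proof (rule ccontr)
    assume nU: "S \<noteq> UNIV"
    have "dim S \<noteq> DIM(complex)"
      using nU sub by (metis dim_eq_full span_eq_iff)
    then have dl: "dim S < DIM(complex)" using dim_subset_UNIV[of S] by linarith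
    obtain a :: complex where a: "a \<noteq> 0" "\<And>y. y \<in> span S \<Longrightarrow> orthogonal a y"
      using orthogonal_to_subspace_exists[OF dl] by blast
    define b where "b = cnj a * \<i>"
    have b0: "b \<noteq> 0" using a(1) by (simp add: b_def)
    define G where "G s = Re (b * Ef \<omega> u s)" for s
    have Ec: "continuous_on {0..1} (Ef \<omega> u)" using u by (rule Ef_cont)
    have Gc: "continuous_on {0..1} G" unfolding G_def using Ec by (intro continuous_intros)
    have EI: "integral {0..1} (Ef \<omega> u) = 0"
      using assms(3) unfolding closure_map_def Ef_def[abs_def] .
    have Eint: "(\<lambda>s. b * Ef \<omega> u s) integrable_on {0..1}"
      using Ec by (intro integrable_continuous_real continuous_intros)
    have G0: "integral {0..1} G = 0"
    proof -
      have "integral {0..1} (Re \<circ> (\<lambda>s. b * Ef \<omega> u s)) = Re (integral {0..1} (\<lambda>s. b * Ef \<omega> u s))"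
        using Eint by (rule integral_linear) (rule bounded_linear_Re)
      then show ?thesis using EI unfolding G_def o_def by simp
    qed
    have H: "integral {0..1} (\<lambda>s. G s * prim w s) = 0" if w: "okw w" for w
    proof -
      have "D_closure_map \<omega> u w \<in> S" unfolding S_def using w by blast
      then have "orthogonal a (D_closure_map \<omega> u w)" using a(2) span_base by blast
      then have 1: "Re (cnj a * D_closure_map \<omega> u w) = 0"
        by (simp add: orthogonal_def inner_complex_def)
      have pc: "continuous_on {0..1} (prim w)" using w by (intro prim_cont okw_int)
      have fi: "(\<lambda>s. b * (Ef \<omega> u s * complex_of_real (prim w s))) integrable_on {0..1}"
        using Ec pc by (intro integrable_continuous_real continuous_intros)
      have "cnj a * D_closure_map \<omega> u w = integral {0..1} (\<lambda>s. b * (Ef \<omega> u s * complex_of_real (prim w s)))"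
        unfolding D_eq b_def by (simp add: algebra_simps)
      then have "Re (cnj a * D_closure_map \<omega> u w) =
          integral {0..1} (Re \<circ> (\<lambda>s. b * (Ef \<omega> u s * complex_of_real (prim w s))))"
        using integral_linear[OF fi bounded_linear_Re] by simp
      also have "\<dots> = integral {0..1} (\<lambda>s. G s * prim w s)"
        unfolding G_def o_def by (simp add: mult.assoc[symmetric])
      finally show ?thesis using 1 by simp
    qed
    have Gz: "\<And>s. s \<in> {0..1} \<Longrightarrow> Re (b * Ef \<omega> u s) = 0"
      using dbr[OF Gc G0 H] unfolding G_def by blast
    show False
      by (rule circle_const[OF Ec _ EI b0 Gz]) (simp add: Ef_def)
  qed
  show ?thesis
  proof
    fix z :: complex
    have "z \<in> S" using \<open>S = UNIV\<close> by simp
    then obtain w where "okw w" "D_closure_map \<omega> u w = z" unfolding S_def by blast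
    then show "\<exists>w\<in>L2_0. D_closure_map \<omega> u w = z" using okw_L2 by blast
  qed
qed

end
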